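(* Let $H$ be an acyclic simple digraph, let $k$ be a positive integer, and let $T$ be a tournament that does not contain $k$ pairwise vertex-disjoint topological minor copies of $H$. Then there is a set $X$ of at most $2^{|V(H)|}k$ vertices of $T$ such that $T-X$ does not contain $H$ as a topological minor.
   Context: A tournament is a simple digraph with exactly one arc between every pair of distinct vertices. A topological minor copy of $H$ in a digraph $G$ is a subgraph $\widehat H$ of $G$ with a map sending vertices of $H$ to distinct vertices of $\widehat H$ and arcs $(u,v)$ of $H$ to directed paths from the image of $u$ to the image of $v$ that are internally vertex-disjoint, contain no image of a vertex of $H$ as an internal vertex, and together cover every arc and every non-image vertex of $\widehat H$ exactly once; $G$ contains $H$ as a topological minor if it has such a subgraph. $T-X$ is the subtournament induced by $V(T)\setminus X$. *)

theory Defs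
  imports Main
begin

definition simple_digraph :: "'a set \<Rightarrow> ('a \<times> 'a) set \<Rightarrow> bool" where
  "simple_digraph V A \<longleftrightarrow> finite V \<and> A \<subseteq> V \<times> V \<and> (\<forall>v. (v, v) \<notin> A)"

definition acyclic_digraph :: "'a set \<Rightarrow> ('a \<times> 'a) set \<Rightarrow> bool" where
  "acyclic_digraph V A \<longleftrightarrow> (\<forall>v. (v, v) \<notin> A\<^sup>+)"

definition tournament :: "'a set \<Rightarrow> ('a \<times> 'a) set \<Rightarrow> bool" where
  "tournament V A \<longleftrightarrow> simple_digraph V A \<and>
     (\<forall>u\<in>V. \<forall>v\<in>V. u \<noteq> v \<longrightarrow> ((u, v) \<in> A \<longleftrightarrow> (v, u) \<notin> A))"

definition dipath :: "'a set \<Rightarrow> ('a \<times> 'a) set \<Rightarrow> 'a list \<Rightarrow> 'a \<Rightarrow> 'a \<Rightarrow> bool" where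
  "dipath V A ps x y \<longleftrightarrow> ps \<noteq> [] \<and> distinct ps \<and> set ps \<subseteq> V \<and> hd ps = x \<and> last ps = y \<and>
     (\<forall>i. Suc i < length ps \<longrightarrow> (ps ! i, ps ! Suc i) \<in> A)"

definition internal :: "'a list \<Rightarrow> 'a set" where
  "internal ps = set (butlast (tl ps))"

text \<open>A topological minor copy of H = (VH, AH) in G = (V, A): an injective branch map f and,
  for every arc e of H, a directed path P e between the images of its ends; the paths are
  internally vertex-disjoint and avoid branch vertices internally.\<close>
definition tm_copy ::
  "'a set \<Rightarrow> ('a \<times> 'a) set \<Rightarrow> 'b set \<Rightarrow> ('b \<times> 'b) set \<Rightarrow> ('b \<Rightarrow> 'a) \<Rightarrow> ('b \<times> 'b \<Rightarrow> 'a list) \<Rightarrow> bool" where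
  "tm_copy V A VH AH f P \<longleftrightarrow>
     inj_on f VH \<and> f ` VH \<subseteq> V \<and>
     (\<forall>(u, v)\<in>AH. dipath V A (P (u, v)) (f u) (f v)) \<and>
     (\<forall>e\<in>AH. internal (P e) \<inter> f ` VH = {}) \<and>
     (\<forall>e\<in>AH. \<forall>e'\<in>AH. e \<noteq> e' \<longrightarrow> internal (P e) \<inter> internal (P e') = {})"

definition tm_verts :: "'b set \<Rightarrow> ('b \<times> 'b) set \<Rightarrow> ('b \<Rightarrow> 'a) \<Rightarrow> ('b \<times> 'b \<Rightarrow> 'a list) \<Rightarrow> 'a set" where
  "tm_verts VH AH f P = f ` VH \<union> (\<Union>e\<in>AH. set (P e))"

definition contains_tm :: "'a set \<Rightarrow> ('a \<times> 'a) set \<Rightarrow> 'b set \<Rightarrow> ('b \<times> 'b) set \<Rightarrow> bool" where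
  "contains_tm V A VH AH \<longleftrightarrow> (\<exists>f P. tm_copy V A VH AH f P)"

definition contains_k_disjoint_tm ::
  "nat \<Rightarrow> 'a set \<Rightarrow> ('a \<times> 'a) set \<Rightarrow> 'b set \<Rightarrow> ('b \<times> 'b) set \<Rightarrow> bool" where
  "contains_k_disjoint_tm k V A VH AH \<longleftrightarrow>
     (\<exists>F :: nat \<Rightarrow> 'b \<Rightarrow> 'a. \<exists>P :: nat \<Rightarrow> 'b \<times> 'b \<Rightarrow> 'a list.
        (\<forall>i<k. tm_copy V A VH AH (F i) (P i)) \<and>
        (\<forall>i<k. \<forall>j<k. i \<noteq> j \<longrightarrow> tm_verts VH AH (F i) (P i) \<inter> tm_verts VH AH (F j) (P j) = {}))"

definition del_verts :: "('a \<times> 'a) set \<Rightarrow> 'a set \<Rightarrow> ('a \<times> 'a) set" where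
  "del_verts A X = {(u, v) \<in> A. u \<notin> X \<and> v \<notin> X}"

end

theory Submission
  imports Defs
begin

lemma embed:
  assumes tour: "tournament VT AT"
  shows "finite VH \<Longrightarrow> AH \<subseteq> VH \<times> VH \<Longrightarrow> acyclic AH \<Longrightarrow> W \<subseteq> VT \<Longrightarrow>
    (VH \<noteq> {} \<Longrightarrow> 2 ^ card VH \<le> 2 * card W) \<Longrightarrow>
    \<exists>f. inj_on f VH \<and> f ` VH \<subseteq> W \<and> (\<forall>(u,v)\<in>AH. (f u, f v) \<in> AT)"
proof (induction "card VH" arbitrary: VH AH W rule: less_induct)
  case less
  show ?case
  proof (cases "VH = {}")
    case True then show ?thesis using less.prems by auto
  next
    case False
    have finV: "finite VT" using tour by (simp add: tournament_def simple_digraph_def)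
    have finW: "finite W" using less.prems(4) finV finite_subset by blast
    have pw: "2 ^ card VH \<le> 2 * card W" using False less.prems by blast
    have cpos: "card VH \<ge> 1" using False less.prems(1) card_0_eq by fastforce
    define c where "c = card VH - 1"
    have cc: "card VH = Suc c" using cpos c_def by simp
    have pw2: "2 ^ c \<le> card W" using pw cc by simp
    hence "W \<noteq> {}" by (metis card.empty le_zero_eq power_not_zero zero_neq_numeral)
    then obtain w where w: "w \<in> W" by blast
    define Out where "Out = {x\<in>W. (w,x)\<in>AT}"
    define In where "In = {x\<in>W. (x,w)\<in>AT}"
    have cover: "W - {w} \<subseteq> Out \<union> In"
    proof
      fix x assume x: "x \<in> W - {w}"
      then have "x \<in> VT" "w \<in> VT" using w less.prems(4) by auto
      then show "x \<in> Out \<union> In" using tour x unfolding tournament_def Out_def In_def by auto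
    qed
    have wno: "w \<notin> Out" "w \<notin> In" using tour
      unfolding Out_def In_def tournament_def simple_digraph_def by auto
    have finAH: "finite AH" using less.prems(1,2) finite_subset by blast
    have wf1: "wf AH" using finAH less.prems(3) finite_acyclic_wf by blast
    have wf2: "wf (AH\<inverse>)" using finAH less.prems(3) finite_acyclic_wf acyclic_converse
      by (metis finite_converse)
    obtain v0 where v0: "v0 \<in> VH" using False by blast
    obtain s where s0: "s \<in> VH" "\<And>y. (y, s) \<in> AH \<Longrightarrow> y \<notin> VH"
      using wfE_min[OF wf1 v0] by blast
    have s: "s \<in> VH" "\<forall>y. (y,s) \<notin> AH" using s0 less.prems(2) by auto
    obtain t where t0: "t \<in> VH" "\<And>y. (y, t) \<in> AH\<inverse> \<Longrightarrow> y \<notin> VH"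
      using wfE_min[OF wf2 v0] by blast
    have t: "t \<in> VH" "\<forall>y. (t,y) \<notin> AH" using t0 less.prems(2) by auto
    have cs: "card (VH - {s}) = c" using cc s less.prems(1) by simp
    have ct: "card (VH - {t}) = c" using cc t less.prems(1) by simp
    have finO: "finite Out" "finite In" using finW Out_def In_def by auto
    have sumc: "card W - 1 \<le> card Out + card In"
    proof -
      have "card (W - {w}) \<le> card (Out \<union> In)" using cover finO by (simp add: card_mono)
      also have "\<dots> \<le> card Out + card In" by (rule card_Un_le)
      finally show ?thesis using w finW by simp
    qed
    have big: "c \<ge> 1 \<Longrightarrow> 2 ^ c \<le> 2 * card Out \<or> 2 ^ c \<le> 2 * card In"
    proof -
      assume "c \<ge> 1"
      then obtain d where d: "c = Suc d" by (cases c) auto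
      have "2 ^ c = 2 * (2::nat) ^ d" using d by simp
      moreover have "\<And>m a b w::nat. 2 * m \<le> w \<Longrightarrow> w - 1 \<le> a + b \<Longrightarrow> 2 * m \<le> 2 * a \<or> 2 * m \<le> 2 * b"
        by arith
      ultimately show ?thesis using pw2 sumc by metis
    qed
    show ?thesis
    proof (cases "c = 0 \<or> 2 ^ c \<le> 2 * card Out")
      case True
      define AH' where "AH' = AH \<inter> ((VH - {s}) \<times> (VH - {s}))"
      have "\<exists>f. inj_on f (VH - {s}) \<and> f ` (VH - {s}) \<subseteq> Out \<and> (\<forall>(u,v)\<in>AH'. (f u, f v) \<in> AT)"
      proof (rule less.hyps)
        show "card (VH - {s}) < card VH" using cs cc by simp
        show "finite (VH - {s})" using less.prems(1) by simp
        show "AH' \<subseteq> (VH - {s}) \<times> (VH - {s})" using AH'_def by blast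
        show "acyclic AH'" using acyclic_subset less.prems(3) AH'_def by blast
        show "Out \<subseteq> VT" using Out_def less.prems(4) by blast
        show "2 ^ card (VH - {s}) \<le> 2 * card Out" if "VH - {s} \<noteq> {}"
          using that True cs less.prems(1) by (metis card_0_eq finite_Diff)
      qed
      then obtain f' where f': "inj_on f' (VH - {s})" "f' ` (VH - {s}) \<subseteq> Out"
        "\<forall>(u,v)\<in>AH'. (f' u, f' v) \<in> AT" by blast
      define f where "f = f'(s := w)"
      have "inj_on f (VH - {s})" using f' f_def by (simp add: inj_on_def)
      moreover have "f s \<notin> f ` (VH - {s})" using f' f_def wno by auto
      ultimately have "inj_on f (insert s (VH - {s}))" by (subst inj_on_insert) simp
      then have "inj_on f VH" using insert_Diff[OF s(1)] by simp
      moreover have "f ` VH \<subseteq> W" using f' f_def w Out_def by auto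
      moreover have "\<forall>(u,v)\<in>AH. (f u, f v) \<in> AT"
      proof (clarify)
        fix u v assume uv: "(u,v) \<in> AH"
        have vs: "v \<noteq> s" using s uv by auto
        have "u \<noteq> v" using uv less.prems(3) unfolding acyclic_def by blast
        show "(f u, f v) \<in> AT"
        proof (cases "u = s")
          case True
          then have "f v \<in> Out" using vs uv less.prems(2) f' f_def by auto
          then show ?thesis using True f_def Out_def by auto
        next
          case False
          then have "(u,v) \<in> AH'" using vs uv less.prems(2) AH'_def by auto
          then show ?thesis using f' f_def False vs by auto
        qed
      qed
      ultimately show ?thesis by blast
    next
      case False
      then have F2: "2 ^ c \<le> 2 * card In" "c \<noteq> 0" using big by auto
      define AH' where "AH' = AH \<inter> ((VH - {t}) \<times> (VH - {t}))"
      have "\<exists>f. inj_on f (VH - {t}) \<and> f ` (VH - {t}) \<subseteq> In \<and> (\<forall>(u,v)\<in>AH'. (f u, f v) \<in> AT)"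
      proof (rule less.hyps)
        show "card (VH - {t}) < card VH" using ct cc by simp
        show "finite (VH - {t})" using less.prems(1) by simp
        show "AH' \<subseteq> (VH - {t}) \<times> (VH - {t})" using AH'_def by blast
        show "acyclic AH'" using acyclic_subset less.prems(3) AH'_def by blast
        show "In \<subseteq> VT" using In_def less.prems(4) by blast
        show "2 ^ card (VH - {t}) \<le> 2 * card In" if "VH - {t} \<noteq> {}"
          using F2 ct by simp
      qed
      then obtain f' where f': "inj_on f' (VH - {t})" "f' ` (VH - {t}) \<subseteq> In"
        "\<forall>(u,v)\<in>AH'. (f' u, f' v) \<in> AT" by blast
      define f where "f = f'(t := w)"
      have "inj_on f (VH - {t})" using f' f_def by (simp add: inj_on_def)
      moreover have "f t \<notin> f ` (VH - {t})" using f' f_def wno by auto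
      ultimately have "inj_on f (insert t (VH - {t}))" by (subst inj_on_insert) simp
      then have "inj_on f VH" using insert_Diff[OF t(1)] by simp
      moreover have "f ` VH \<subseteq> W" using f' f_def w In_def by auto
      moreover have "\<forall>(u,v)\<in>AH. (f u, f v) \<in> AT"
      proof (clarify)
        fix u v assume uv: "(u,v) \<in> AH"
        have ut: "u \<noteq> t" using t uv by auto
        show "(f u, f v) \<in> AT"
        proof (cases "v = t")
          case True
          then have "f u \<in> In" using ut uv less.prems(2) f' f_def by auto
          then show ?thesis using True f_def In_def by auto
        next
          case False
          then have "(u,v) \<in> AH'" using ut uv less.prems(2) AH'_def by auto
          then show ?thesis using f' f_def False ut by auto
        qed
      qed
      ultimately show ?thesis by blast
    qed
  qed
qed


lemma many:
  assumes tour: "tournament VT AT" and fin: "finite VH" and sub: "AH \<subseteq> VH \<times> VH"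
    and acy: "acyclic AH" and ne: "VH \<noteq> {}"
  shows "W \<subseteq> VT \<Longrightarrow> j * 2 ^ card VH \<le> card W \<Longrightarrow>
    \<exists>F. (\<forall>i<j. inj_on (F i) VH \<and> F i ` VH \<subseteq> W \<and> (\<forall>(u,v)\<in>AH. (F i u, F i v) \<in> AT)) \<and>
        (\<forall>i<j. \<forall>i'<j. i \<noteq> i' \<longrightarrow> F i ` VH \<inter> F i' ` VH = {})"
proof (induction j arbitrary: W)
  case 0
  then show ?case by auto
next
  case (Suc j)
  have finV: "finite VT" using tour by (simp add: tournament_def simple_digraph_def)
  have finW: "finite W" using Suc.prems(1) finV finite_subset by blast
  have "2 ^ card VH \<le> card W" using Suc.prems(2) by simp
  then have "2 ^ card VH \<le> 2 * card W" by simp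
  then obtain f where f: "inj_on f VH" "f ` VH \<subseteq> W" "\<forall>(u,v)\<in>AH. (f u, f v) \<in> AT"
    using embed[OF tour fin sub acy Suc.prems(1)] by blast
  define W' where "W' = W - f ` VH"
  have cf: "card (f ` VH) = card VH" using f(1) by (simp add: card_image)
  have lt: "card VH < 2 ^ card VH" by (rule less_exp)
  have "finite (f ` VH)" using f(2) finW finite_subset by blast
  then have cd: "card W' = card W - card VH" using W'_def f(2) cf by (simp add: card_Diff_subset)
  have "Suc j * 2 ^ card VH = 2 ^ card VH + j * 2 ^ card VH" by simp
  then have cW': "j * 2 ^ card VH \<le> card W'" using Suc.prems(2) lt cd by linarith
  have W'sub: "W' \<subseteq> VT" using W'_def Suc.prems(1) by blast
  obtain F where F: "\<forall>i<j. inj_on (F i) VH \<and> F i ` VH \<subseteq> W' \<and> (\<forall>(u,v)\<in>AH. (F i u, F i v) \<in> AT)"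
      "\<forall>i<j. \<forall>i'<j. i \<noteq> i' \<longrightarrow> F i ` VH \<inter> F i' ` VH = {}"
    using Suc.IH[OF W'sub cW'] by (elim exE conjE) (rule that; assumption)
  define G where "G = F(j := f)"
  have "\<forall>i<Suc j. inj_on (G i) VH \<and> G i ` VH \<subseteq> W \<and> (\<forall>(u,v)\<in>AH. (G i u, G i v) \<in> AT)"
  proof (intro allI impI)
    fix i assume "i < Suc j"
    show "inj_on (G i) VH \<and> G i ` VH \<subseteq> W \<and> (\<forall>(u,v)\<in>AH. (G i u, G i v) \<in> AT)"
    proof (cases "i = j")
      case True then show ?thesis using f G_def by simp
    next
      case False
      then have "i < j" using \<open>i < Suc j\<close> by simp
      then have "inj_on (F i) VH \<and> F i ` VH \<subseteq> W' \<and> (\<forall>(u,v)\<in>AH. (F i u, F i v) \<in> AT)"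
        using F(1) by blast
      then show ?thesis using False G_def W'_def by auto
    qed
  qed
  moreover have "\<forall>i<Suc j. \<forall>i'<Suc j. i \<noteq> i' \<longrightarrow> G i ` VH \<inter> G i' ` VH = {}"
  proof (intro allI impI)
    fix i i' assume ii: "i < Suc j" "i' < Suc j" "i \<noteq> i'"
    show "G i ` VH \<inter> G i' ` VH = {}"
    proof (cases "i = j")
      case True
      then have "i' < j" using ii by simp
      then have "G i' ` VH \<subseteq> W'" using F(1) G_def by auto
      moreover have "G i = f" using True G_def by simp
      ultimately show ?thesis using W'_def by blast
    next
      case False
      then have i: "i < j" using ii by simp
      show ?thesis
      proof (cases "i' = j")
        case True
        have "G i ` VH \<subseteq> W'" using F(1) G_def i False by auto
        moreover have "G i' = f" using True G_def by simp
        ultimately show ?thesis using W'_def by blast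
      next
        case False
        then show ?thesis using F(2) G_def i ii \<open>i \<noteq> j\<close> by auto
      qed
    qed
  qed
  ultimately show ?case by blast
qed

theorem corollary20:
  fixes VT :: "'a set" and AT :: "('a \<times> 'a) set"
    and VH :: "'b set" and AH :: "('b \<times> 'b) set" and k :: nat
  assumes "simple_digraph VH AH" and "acyclic_digraph VH AH"
    and "k > 0"
    and "tournament VT AT"
    and "\<not> contains_k_disjoint_tm k VT AT VH AH"
  shows "\<exists>X. X \<subseteq> VT \<and> card X \<le> 2 ^ card VH * k \<and>
           \<not> contains_tm (VT - X) (del_verts AT X) VH AH"
proof -
  have fin: "finite VH" and sub: "AH \<subseteq> VH \<times> VH" and irr: "\<forall>v. (v,v) \<notin> AH"
    using assms(1) by (auto simp: simple_digraph_def)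
  have acy: "acyclic AH" using assms(2) by (simp add: acyclic_digraph_def acyclic_def)
  show ?thesis
  proof (cases "VH = {}")
    case True
    then have "AH = {}" using sub by auto
    then have "contains_k_disjoint_tm k VT AT VH AH" using True
      unfolding contains_k_disjoint_tm_def tm_copy_def tm_verts_def by auto
    then show ?thesis using assms(5) by blast
  next
    case ne: False
    have small: "card VT < k * 2 ^ card VH"
    proof (rule ccontr)
      assume "\<not> card VT < k * 2 ^ card VH"
      then obtain F where F: "\<forall>i<k. inj_on (F i) VH \<and> F i ` VH \<subseteq> VT \<and> (\<forall>(u,v)\<in>AH. (F i u, F i v) \<in> AT)"
          "\<forall>i<k. \<forall>i'<k. i \<noteq> i' \<longrightarrow> F i ` VH \<inter> F i' ` VH = {}"
        using many[OF assms(4) fin sub acy ne, of VT k] by auto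
      define P where "P = (\<lambda>(i::nat) (e::'b \<times> 'b). [F i (fst e), F i (snd e)])"
      have tv: "tm_verts VH AH (F i) (P i) = F i ` VH" for i
        unfolding tm_verts_def P_def using sub by auto
      have int: "internal (P i e) = {}" for i e
        unfolding internal_def P_def by simp
      have "tm_copy VT AT VH AH (F i) (P i)" if i: "i < k" for i
        unfolding tm_copy_def
      proof (intro conjI)
        show "inj_on (F i) VH" "F i ` VH \<subseteq> VT" using F(1) i by auto
        show "\<forall>(u, v)\<in>AH. dipath VT AT (P i (u, v)) (F i u) (F i v)"
        proof clarify
          fix u v assume uv: "(u,v) \<in> AH"
          have "u \<noteq> v" using uv irr by auto
          moreover have "u \<in> VH" "v \<in> VH" using uv sub by auto
          ultimately have "F i u \<noteq> F i v" using F(1) i by (meson inj_on_def)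
          moreover have "(F i u, F i v) \<in> AT" using F(1) i uv by auto
          moreover have "F i u \<in> VT" "F i v \<in> VT" using F(1) i \<open>u \<in> VH\<close> \<open>v \<in> VH\<close> by auto
          ultimately show "dipath VT AT (P i (u, v)) (F i u) (F i v)"
            unfolding dipath_def P_def by (auto simp: less_Suc_eq)
        qed
        show "\<forall>e\<in>AH. internal (P i e) \<inter> F i ` VH = {}" using int by simp
        show "\<forall>e\<in>AH. \<forall>e'\<in>AH. e \<noteq> e' \<longrightarrow> internal (P i e) \<inter> internal (P i e') = {}"
          using int by simp
      qed
      moreover have "\<forall>i<k. \<forall>j<k. i \<noteq> j \<longrightarrow> tm_verts VH AH (F i) (P i) \<inter> tm_verts VH AH (F j) (P j) = {}"
        using F(2) tv by simp
      ultimately have "contains_k_disjoint_tm k VT AT VH AH"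
        unfolding contains_k_disjoint_tm_def by (intro exI[of _ F] exI[of _ P]) simp
      then show False using assms(5) by blast
    qed
    have "\<not> contains_tm (VT - VT) (del_verts AT VT) VH AH"
      using ne unfolding contains_tm_def tm_copy_def by auto
    moreover have "card VT \<le> 2 ^ card VH * k" using small by (simp add: mult.commute)
    ultimately show ?thesis by blast
  qed
qed

end
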